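(* Let $\mathcal V$ be a finite set of agents, $\mathcal L\subseteq\mathcal V$ a set of leaders, $\overline\pi\in\mathbb N_{\geq 1}$, and $\delta\geq 0$ an integer bound on communication delays. For each time $t\in\mathbb N$ let $\mathcal N_i^t\subseteq\mathcal V$ be the in-neighborhood of agent $i$ (with $i\in\mathcal N_i^t$), and let $\mathcal E^t=\{(j,i): j\in\mathcal N_i^t\}$. Hierarchy levels $\pi_i^t\in\{0,1,\dots,\overline\pi\}$ evolve as follows: $\pi_\ell^t=0$ for all $t$ and all $\ell\in\mathcal L$; for each follower $i\in\mathcal V\setminus\mathcal L$, $\pi_i^0=\overline\pi$ and for $t\geq 1$ $$\pi_i^t=\min\Bigl\{\overline\pi,\;1+\min_{j\in\mathcal N_i^t\setminus\{i\}}\pi_j^{\,t-\delta^t_{j|i}-1}\Bigr\},$$ where $\delta^t_{j|i}\in\{0,\dots,\delta\}$ is the delay with which $i$ receives $j$'s information at time $t$ (with $t-\delta^t_{j|i}-1\geq 0$), and the inner minimum over an empty set is $+\infty$. Let $D\in\{0,1,\dots,\overline\pi\}$ and let $\bar t\geq(\delta+1)D$ be such that $\mathcal E^s=\mathcal E^{\bar t}$ for all $s$ with $\bar t-(\delta+1)D\leq s\leq\bar t$. Then for every agent $i\in\mathcal V$, $$\pi_i^{\bar t}=D_i^{\mathcal E^{\bar t}}\quad\text{if } D_i^{\mathcal E^{\bar t}}\leq D,\qquad \pi_i^{\bar t}>D\quad\text{otherwise}.$$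
   Context: For a directed graph $(\mathcal V,\mathcal E)$ whose edge $(j,i)\in\mathcal E$ means that $j$ is an in-neighbor of $i$ (i.e., information flows from $j$ to $i$), the graph distance from a leader $\ell$ to agent $i$ is the smallest $\eta\geq 0$ such that there is a sequence $\ell=j_0,j_1,\dots,j_\eta=i$ with $(j_{k},j_{k+1})\in\mathcal E$ for all $k<\eta$ (it is $+\infty$ if no such sequence exists, and $0$ iff $i=\ell$). The exact hierarchy level of $i$ with respect to $\mathcal E$ is $D_i^{\mathcal E}=\min\{\overline\pi,\ \min_{\ell\in\mathcal L}\operatorname{dist}^{\mathcal E}(\ell,i)\}$. (In the paper's application the connectivity is proximity-based and hence symmetric, so the direction of paths is immaterial there.) *)

theory Defs
  imports Main "HOL-Library.Extended_Nat"
begin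

definition edges :: "'a set \<Rightarrow> (nat \<Rightarrow> 'a \<Rightarrow> 'a set) \<Rightarrow> nat \<Rightarrow> ('a \<times> 'a) set" where
  "edges V N t = {(j, i). i \<in> V \<and> j \<in> N t i}"

definition walk_len :: "('a \<times> 'a) set \<Rightarrow> 'a \<Rightarrow> 'a \<Rightarrow> nat \<Rightarrow> bool" where
  "walk_len E l i eta \<longleftrightarrow>
     (\<exists>p :: nat \<Rightarrow> 'a. p 0 = l \<and> p eta = i \<and> (\<forall>k<eta. (p k, p (Suc k)) \<in> E))"

definition gdist :: "('a \<times> 'a) set \<Rightarrow> 'a \<Rightarrow> 'a \<Rightarrow> enat" where
  "gdist E l i = (if \<exists>eta. walk_len E l i eta then enat (LEAST eta. walk_len E l i eta) else \<infinity>)"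

definition exact_level :: "nat \<Rightarrow> 'a set \<Rightarrow> ('a \<times> 'a) set \<Rightarrow> 'a \<Rightarrow> enat" where
  "exact_level pibar L E i = min (enat pibar) (INF l\<in>L. gdist E l i)"

definition follower_update ::
  "nat \<Rightarrow> (nat \<Rightarrow> 'a \<Rightarrow> nat) \<Rightarrow> (nat \<Rightarrow> 'a \<Rightarrow> 'a set) \<Rightarrow> (nat \<Rightarrow> 'a \<Rightarrow> 'a \<Rightarrow> nat)
     \<Rightarrow> nat \<Rightarrow> 'a \<Rightarrow> nat" where
  "follower_update pibar lev N d t i =
     (let S = (\<lambda>j. lev (t - d t j i - 1) j) ` (N t i - {i}) in
      if S = {} then pibar else min pibar (1 + Min S))"

end

theory Submission
  imports Defs
begin

lemma INF_att:
  fixes f :: "'a \<Rightarrow> enat"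
  assumes "finite L" "L \<noteq> {}"
  shows "\<exists>l\<in>L. (INF l\<in>L. f l) = f l"
proof -
  have "Inf (f ` L) \<in> f ` L"
    by (rule finite_Inf_in) (use assms in \<open>auto simp: inf_min min_def\<close>)
  then show ?thesis by auto
qed

lemma walk0: "walk_len E l i 0 \<longleftrightarrow> l = i"
  unfolding walk_len_def by auto

lemma walk_snoc: "walk_len E l j n \<Longrightarrow> (j,i) \<in> E \<Longrightarrow> walk_len E l i (Suc n)"
  unfolding walk_len_def
proof (elim exE conjE)
  fix p assume h: "p 0 = l" "p n = j" "\<forall>k<n. (p k, p (Suc k)) \<in> E" "(j,i) \<in> E"
  show "\<exists>p. p 0 = l \<and> p (Suc n) = i \<and> (\<forall>k<Suc n. (p k, p (Suc k)) \<in> E)"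
    apply (rule exI[of _ "p(Suc n := i)"])
    using h by (auto simp: less_Suc_eq)
qed

lemma walk_pred: "walk_len E l i (Suc n) \<Longrightarrow> \<exists>j. walk_len E l j n \<and> (j,i) \<in> E"
  unfolding walk_len_def by (metis lessI less_SucI)

lemma gdist_le: "walk_len E l i n \<Longrightarrow> gdist E l i \<le> enat n"
  unfolding gdist_def by (auto intro: Least_le)

lemma gdist_walk: "gdist E l i = enat n \<Longrightarrow> walk_len E l i n"
  unfolding gdist_def by (auto split: if_splits intro: LeastI)

lemma gdist_self: "gdist E l l = 0"
  using gdist_le[of E l l 0] walk0[of E l l] by (simp add: zero_enat_def[symmetric])

lemma gdist_edge: "(j,i) \<in> E \<Longrightarrow> gdist E l i \<le> gdist E l j + 1"
proof (cases "gdist E l j")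
  case (enat n)
  assume "(j,i) \<in> E"
  then have w: "walk_len E l i (Suc n)" using walk_snoc gdist_walk enat by metis
  show ?thesis using gdist_le[OF w] enat by (simp add: one_enat_def)
qed simp

lemma gdist_zero: "gdist E l i = 0 \<Longrightarrow> l = i"
  using gdist_walk[of E l i 0] walk0[of E l i] by (simp add: zero_enat_def[symmetric])

context
  fixes pibar :: nat and L :: "'a set" and E :: "('a \<times> 'a) set"
  assumes finL: "finite L"
begin

lemma el_edge: "(j,i) \<in> E \<Longrightarrow> exact_level pibar L E i \<le> exact_level pibar L E j + 1"
proof (cases "L = {}")
  case True then show ?thesis by (simp add: exact_level_def)
next
  case False
  assume e: "(j,i) \<in> E"
  obtain l where l: "l \<in> L" "(INF l\<in>L. gdist E l j) = gdist E l j"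
    using INF_att[OF finL False] by blast
  have "(INF l\<in>L. gdist E l i) \<le> gdist E l i" using l(1) by (rule INF_lower)
  also have "\<dots> \<le> gdist E l j + 1" using gdist_edge[OF e] .
  finally have "(INF l\<in>L. gdist E l i) \<le> (INF l\<in>L. gdist E l j) + 1" using l(2) by simp
  then show ?thesis unfolding exact_level_def
    by (smt (verit) add_right_mono min.mono min_def order.trans le_iff_add)
qed

lemma el_leader: "l \<in> L \<Longrightarrow> exact_level pibar L E l = 0"
  unfolding exact_level_def
  by (metis INF_lower gdist_self le_zero_eq min.absorb2 zero_le)

lemma el_pos: "pibar \<ge> 1 \<Longrightarrow> i \<notin> L \<Longrightarrow> exact_level pibar L E i \<noteq> 0"
proof
  assume p: "pibar \<ge> 1" "i \<notin> L" and z: "exact_level pibar L E i = 0"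
  then have I: "(INF l\<in>L. gdist E l i) = 0" unfolding exact_level_def
    by (metis enat_0_iff(1) min_def not_one_le_zero)
  then have "L \<noteq> {}" by (auto simp: top_enat_def)
  then obtain l where "l \<in> L" "(INF l\<in>L. gdist E l i) = gdist E l i"
    using INF_att[OF finL] by blast
  then show False using I gdist_zero p by metis
qed

lemma el_pred:
  assumes "i \<notin> L" "exact_level pibar L E i < enat pibar"
  shows "\<exists>j. (j,i) \<in> E \<and> j \<noteq> i \<and> exact_level pibar L E j + 1 \<le> exact_level pibar L E i"
proof -
  have I: "exact_level pibar L E i = (INF l\<in>L. gdist E l i)"
    using assms(2) unfolding exact_level_def by (simp add: min_def split: if_splits)
  then have "L \<noteq> {}" using assms(2) by (auto simp: top_enat_def)
  then obtain l where l: "l \<in> L" "(INF l\<in>L. gdist E l i) = gdist E l i"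
    using INF_att[OF finL] by blast
  obtain n where n: "gdist E l i = enat n" using assms(2) I l(2) by (cases "gdist E l i") auto
  have "n \<noteq> 0" using n gdist_zero[of E l i] l assms(1) by (auto simp: zero_enat_def)
  then obtain m where m: "n = Suc m" by (cases n) auto
  obtain j where j: "walk_len E l j m" "(j,i) \<in> E"
    using walk_pred gdist_walk n m by metis
  have gj: "gdist E l j \<le> enat m" using gdist_le j(1) .
  have "j \<noteq> i" using gj n m by auto
  moreover have "exact_level pibar L E j \<le> enat m"
    unfolding exact_level_def using gj l(1)
    by (meson INF_lower min.coboundedI2 order.trans)
  then have "exact_level pibar L E j + 1 \<le> exact_level pibar L E i"
    using I l n m by (metis add_right_mono eSuc_enat eSuc_plus_1)
  ultimately show ?thesis using j by blast
qed

end

lemma step_core: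
  fixes e :: "'a \<Rightarrow> enat" and g :: "'a \<Rightarrow> nat"
  assumes finA: "finite A"
    and x: "x = (if g ` A = {} then pibar else min pibar (1 + Min (g ` A)))"
    and h1: "\<forall>j\<in>A. ei \<le> e j + 1"
    and h2: "ei < enat pibar \<Longrightarrow> \<exists>j\<in>A. e j + 1 \<le> ei"
    and h3: "\<forall>j\<in>A. (e j \<le> enat k \<longrightarrow> enat (g j) = e j) \<and> (\<not> e j \<le> enat k \<longrightarrow> g j > k)"
    and h4: "ei \<le> enat pibar"
  shows "(ei \<le> enat (Suc k) \<longrightarrow> enat x = ei) \<and> (\<not> ei \<le> enat (Suc k) \<longrightarrow> x > Suc k)"
proof (intro conjI impI)
  assume c: "ei \<le> enat (Suc k)"
  then obtain n where n: "ei = enat n" "n \<le> Suc k" by (cases ei) auto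
  have lo: "n \<le> x"
  proof (cases "g ` A = {}")
    case True then show ?thesis using x h4 n by simp
  next
    case False
    obtain j0 where j0: "j0 \<in> A" "Min (g ` A) = g j0"
      using Min_in[OF finite_imageI[OF finA] False] by auto
    have "n \<le> 1 + g j0"
    proof (cases "e j0 \<le> enat k")
      case True
      then have "enat (g j0) = e j0" using h3 j0 by blast
      then show ?thesis using h1 j0 n by (metis add.commute enat_ord_simps(1) plus_enat_simps(1) one_enat_def)
    next
      case False
      then have "g j0 > k" using h3 j0 by blast
      then show ?thesis using n by simp
    qed
    then show ?thesis using x False j0 h4 n by simp
  qed
  have up: "x \<le> n"
  proof (cases "n = pibar")
    case True then show ?thesis using x by (simp split: if_splits)
  next
    case False
    then have "ei < enat pibar" using h4 n by simp
    then obtain j where j: "j \<in> A" "e j + 1 \<le> ei" using h2 by blast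
    then have "e j \<le> enat k" using n
      by (cases "e j") (auto simp: one_enat_def)
    then have gj: "enat (g j) = e j" using h3 j by blast
    then have "g j + 1 \<le> n" using j n by (metis enat_ord_simps(1) plus_enat_simps(1) one_enat_def)
    moreover have "Min (g ` A) \<le> g j" using finA j by simp
    moreover have "g ` A \<noteq> {}" using j by auto
    ultimately show ?thesis using x by simp
  qed
  show "enat x = ei" using lo up n by simp
next
  assume c: "\<not> ei \<le> enat (Suc k)"
  have pb: "Suc k < pibar" using c h4 by (metis enat_ord_simps(1) not_le order.trans)
  have gk: "g j > k" if j: "j \<in> A" for j
  proof -
    have "\<not> e j \<le> enat k"
    proof
      assume "e j \<le> enat k"
      then have "e j + 1 \<le> enat (Suc k)" by (cases "e j") (auto simp: one_enat_def)
      then show False using h1 j c by (meson order.trans)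
    qed
    then show ?thesis using h3 j by blast
  qed
  show "x > Suc k"
  proof (cases "g ` A = {}")
    case True then show ?thesis using x pb by simp
  next
    case False
    obtain j0 where j0: "j0 \<in> A" "Min (g ` A) = g j0"
      using Min_in[OF finite_imageI[OF finA] False] by auto
    then show ?thesis using x False pb gk[OF j0(1)] by simp
  qed
qed


theorem mainTheorem1:
  fixes V L :: "'a set"
    and N :: "nat \<Rightarrow> 'a \<Rightarrow> 'a set"
    and d :: "nat \<Rightarrow> 'a \<Rightarrow> 'a \<Rightarrow> nat"
    and lev :: "nat \<Rightarrow> 'a \<Rightarrow> nat"
    and pibar delta D tbar :: nat
  assumes finV: "finite V"
    and LV: "L \<subseteq> V"
    and pibar_pos: "pibar \<ge> 1"
    and N_sub: "\<And>t i. i \<in> V \<Longrightarrow> N t i \<subseteq> V"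
    and N_self: "\<And>t i. i \<in> V \<Longrightarrow> i \<in> N t i"
    and delay_bound: "\<And>t i j. t \<ge> 1 \<Longrightarrow> i \<in> V - L \<Longrightarrow> j \<in> N t i - {i} \<Longrightarrow>
                         d t j i \<le> delta \<and> d t j i + 1 \<le> t"
    and leaders: "\<And>t l. l \<in> L \<Longrightarrow> lev t l = 0"
    and init: "\<And>i. i \<in> V - L \<Longrightarrow> lev 0 i = pibar"
    and update: "\<And>t i. t \<ge> 1 \<Longrightarrow> i \<in> V - L \<Longrightarrow> lev t i = follower_update pibar lev N d t i"
    and D_le: "D \<le> pibar"
    and tbar_ge: "tbar \<ge> (delta + 1) * D"
    and static: "\<And>s. tbar - (delta + 1) * D \<le> s \<Longrightarrow> s \<le> tbar \<Longrightarrow> edges V N s = edges V N tbar"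
    and iV: "i \<in> V"
  shows "(exact_level pibar L (edges V N tbar) i \<le> enat D \<longrightarrow>
            enat (lev tbar i) = exact_level pibar L (edges V N tbar) i)
       \<and> (\<not> exact_level pibar L (edges V N tbar) i \<le> enat D \<longrightarrow> lev tbar i > D)"
proof -
  define E where "E = edges V N tbar"
  define e where "e = exact_level pibar L E"
  define a where "a = delta + 1"
  have finL: "finite L" using finV LV finite_subset by blast
  have edgeI: "(j,i) \<in> E" if "i \<in> V" "j \<in> N tbar i" for i j
    using that unfolding E_def edges_def by auto
  have edgeD: "j \<in> N tbar i" if "(j,i) \<in> E" for i j
    using that unfolding E_def edges_def by auto
  have NE: "N s i = N tbar i" if "tbar - a * D \<le> s" "s \<le> tbar" "i \<in> V" for s i
  proof -
    have "edges V N s = edges V N tbar" using static[of s] that unfolding a_def by blast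
    then show ?thesis using that(3) unfolding edges_def by (auto simp: set_eq_iff)
  qed
  have P: "\<forall>t. tbar - a * (D - k) \<le> t \<longrightarrow> t \<le> tbar \<longrightarrow> (\<forall>i\<in>V.
      (e i \<le> enat k \<longrightarrow> enat (lev t i) = e i) \<and> (\<not> e i \<le> enat k \<longrightarrow> lev t i > k))"
    if "k \<le> D" for k
    using that
  proof (induction k)
    case 0
    show ?case
    proof (intro allI impI ballI)
      fix t i assume i: "i \<in> V"
      show "(e i \<le> enat 0 \<longrightarrow> enat (lev t i) = e i) \<and> (\<not> e i \<le> enat 0 \<longrightarrow> lev t i > 0)"
      proof (cases "i \<in> L")
        case True
        then show ?thesis using leaders el_leader[OF finL] unfolding e_def by (simp add: zero_enat_def)
      next
        case False
        then have "e i \<noteq> 0" using el_pos[OF finL pibar_pos] unfolding e_def by blast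
        then have "\<not> e i \<le> enat 0" by (simp add: zero_enat_def[symmetric])
        moreover have "lev t i > 0"
        proof (cases "t = 0")
          case True then show ?thesis using init i False pibar_pos by simp
        next
          case False
          then have "lev t i = follower_update pibar lev N d t i" using update i \<open>i \<notin> L\<close> by simp
          then show ?thesis using pibar_pos unfolding follower_update_def Let_def by simp
        qed
        ultimately show ?thesis by blast
      qed
    qed
  next
    case (Suc k)
    then have IH: "\<forall>t. tbar - a * (D - k) \<le> t \<longrightarrow> t \<le> tbar \<longrightarrow> (\<forall>i\<in>V.
      (e i \<le> enat k \<longrightarrow> enat (lev t i) = e i) \<and> (\<not> e i \<le> enat k \<longrightarrow> lev t i > k))" by simp
    obtain r where r: "D = Suc k + r" using Suc.prems le_Suc_ex by blast
    have Dk: "D - Suc k = r" "D - k = Suc r" using r by auto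
    have aD: "a * D = a * Suc k + a * r" using r by (simp add: algebra_simps)
    have aS: "a * Suc k \<ge> a" by simp
    have ar: "a * Suc r = a + a * r" by simp
    have a1: "a = delta + 1" by (simp add: a_def)
    have tb: "tbar \<ge> a * D" using tbar_ge a_def by simp
    show ?case
    proof (intro allI impI ballI)
      fix t i assume t: "tbar - a * (D - Suc k) \<le> t" "t \<le> tbar" and i: "i \<in> V"
      have tr: "tbar - a * r \<le> t" using t Dk by simp
      show "(e i \<le> enat (Suc k) \<longrightarrow> enat (lev t i) = e i) \<and> (\<not> e i \<le> enat (Suc k) \<longrightarrow> lev t i > Suc k)"
      proof (cases "i \<in> L")
        case True
        then show ?thesis using leaders el_leader[OF finL] unfolding e_def by (simp add: zero_enat_def)
      next
        case False
        have t1: "t \<ge> 1" using tr tb aD aS a1 by linarith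
        have tw: "tbar - a * D \<le> t" using tr aD by linarith
        have Nt: "N t i = N tbar i" using NE[OF tw t(2) i] .
        define A where "A = N t i - {i}"
        define g where "g = (\<lambda>j. lev (t - d t j i - 1) j)"
        have finA: "finite A" unfolding A_def using N_sub[OF i] finV finite_subset by blast
        have x: "lev t i = (if g ` A = {} then pibar else min pibar (1 + Min (g ` A)))"
          using update[OF t1] i False unfolding follower_update_def Let_def A_def g_def by simp
        have h1: "\<forall>j\<in>A. e i \<le> e j + 1"
          unfolding e_def using el_edge[OF finL] edgeI i Nt unfolding A_def by blast
        have h2: "\<exists>j\<in>A. e j + 1 \<le> e i" if lt: "e i < enat pibar"
        proof -
          obtain j where "(j,i) \<in> E" "j \<noteq> i" "e j + 1 \<le> e i"
            using el_pred[OF finL False lt[unfolded e_def]] unfolding e_def by blast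
          then show ?thesis using edgeD Nt unfolding A_def by blast
        qed
        have h3: "\<forall>j\<in>A. (e j \<le> enat k \<longrightarrow> enat (g j) = e j) \<and> (\<not> e j \<le> enat k \<longrightarrow> g j > k)"
        proof
          fix j assume j: "j \<in> A"
          then have jV: "j \<in> V" using N_sub[OF i] unfolding A_def by blast
          have db: "d t j i \<le> delta \<and> d t j i + 1 \<le> t"
            using delay_bound[OF t1] i False j unfolding A_def by blast
          have w1: "tbar - a * (D - k) \<le> t - d t j i - 1"
          proof -
            have "a * (D - k) = a + a * r" using Dk(2) ar by simp
            then show ?thesis using db tr tb aD aS a1 by linarith
          qed
          have w2: "t - d t j i - 1 \<le> tbar" using t by linarith
          show "(e j \<le> enat k \<longrightarrow> enat (g j) = e j) \<and> (\<not> e j \<le> enat k \<longrightarrow> g j > k)"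
            using IH w1 w2 jV unfolding g_def by blast
        qed
        have h4: "e i \<le> enat pibar" unfolding e_def exact_level_def by simp
        show ?thesis using step_core[OF finA x h1 h2 h3 h4] by blast
      qed
    qed
  qed
  have "\<forall>i\<in>V. (e i \<le> enat D \<longrightarrow> enat (lev tbar i) = e i) \<and> (\<not> e i \<le> enat D \<longrightarrow> lev tbar i > D)"
    using P[of D] by simp
  then show ?thesis using iV unfolding e_def E_def by blast
qed

end
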